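(* Let $P$ be a full-dimensional convex polytope in $\mathbb{R}^d$. Then $$A_P(1) = \lim_{\epsilon\to0^+}\sum_{x\in\mathbb{Z}^d}(\mathbf{1}_P*\mathcal{G}_\epsilon)(x).$$
   Context: $\mathbf{1}_P$ is the indicator function of $P$; $\mathcal{G}_\epsilon(x) := \epsilon^{-d/2}e^{-\pi\|x\|^2/\epsilon}$; $\omega_P(x) := \lim_{r\to0^+}\frac{\mathrm{vol}(B(x,r)\cap P)}{\mathrm{vol}(B(x,r))}$; $A_P(t):=\sum_{x\in\mathbb{Z}^d}\omega_{tP}(x)$, so $A_P(1)=\sum_{x\in\mathbb{Z}^d}\omega_P(x)$. *)

theory Defs
  imports "HOL-Analysis.Analysis"
begin

definition lattice_points :: "(real ^ 'n) set" where
  "lattice_points = {x. \<forall>i. x $ i \<in> \<int>}"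

definition gauss :: "real \<Rightarrow> real ^ 'n \<Rightarrow> real" where
  "gauss \<epsilon> x = \<epsilon> powr (- real CARD('n) / 2) * exp (- pi * norm x ^ 2 / \<epsilon>)"

definition conv_ind_gauss :: "(real ^ 'n) set \<Rightarrow> real \<Rightarrow> real ^ 'n \<Rightarrow> real" where
  "conv_ind_gauss P \<epsilon> x = integral\<^sup>L lborel (\<lambda>y. indicator P y * gauss \<epsilon> (x - y))"

definition solid_angle :: "(real ^ 'n) set \<Rightarrow> real ^ 'n \<Rightarrow> real" where
  "solid_angle P x = Lim (at_right 0)
     (\<lambda>r. measure lebesgue (ball x r \<inter> P) / measure lebesgue (ball x r))"

definition A_P :: "(real ^ 'n) set \<Rightarrow> real \<Rightarrow> real" where
  "A_P P t = (\<Sum>\<^sub>\<infinity>x\<in>lattice_points. solid_angle ((\<lambda>y. t *\<^sub>R y) ` P) x)"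

end

theory Submission
  imports Defs "HOL-Probability.Probability"
begin


lemma gauss1d:
  assumes c: "(c::real) > 0"
  shows "(\<integral>\<^sup>+t. ennreal (exp (- c * t\<^sup>2)) \<partial>lborel) = ennreal (sqrt (pi / c))"
proof -
  define \<sigma> where "\<sigma> = sqrt (1 / (2 * c))"
  have s2: "\<sigma>\<^sup>2 = 1 / (2*c)" using c by (simp add: \<sigma>_def)
  have eq: "exp (- c * t\<^sup>2) = sqrt (pi / c) * normal_density 0 \<sigma> t" for t
  proof -
    have "2 * pi * \<sigma>\<^sup>2 = pi / c" using c s2 by (simp add: field_simps)
    moreover have "- (t - 0)\<^sup>2 / (2 * \<sigma>\<^sup>2) = - c * t\<^sup>2" using c by (simp add: s2)
    ultimately have "normal_density 0 \<sigma> t = (1 / sqrt (pi / c)) * exp (- c * t\<^sup>2)"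
      unfolding normal_density_def by metis
    then show ?thesis using c by simp
  qed
  have "(\<integral>\<^sup>+t. ennreal (exp (- c * t\<^sup>2)) \<partial>lborel)
      = (\<integral>\<^sup>+t. ennreal (sqrt (pi / c)) * ennreal (normal_density 0 \<sigma> t) \<partial>lborel)"
    by (intro nn_integral_cong, subst eq) (rule ennreal_mult, auto intro: divide_nonneg_pos c)
  also have "\<dots> = ennreal (sqrt (pi / c)) * (\<integral>\<^sup>+t. ennreal (normal_density 0 \<sigma> t) \<partial>lborel)"
    by (rule nn_integral_cmult) simp
  also have "(\<integral>\<^sup>+t. ennreal (normal_density 0 \<sigma> t) \<partial>lborel) = 1"
    using c by (subst nn_integral_eq_integral)
       (auto simp: \<sigma>_def intro!: integrable_normal_density integral_normal_density)
  finally show ?thesis by simp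
qed

lemma norm_sq_Basis: "(norm (z::'a::euclidean_space))\<^sup>2 = (\<Sum>b\<in>Basis. (z \<bullet> b)\<^sup>2)"
  by (simp add: norm_eq_sqrt_inner euclidean_inner[of z z] power2_eq_square sum_nonneg)

lemma gaussd:
  assumes c: "(c::real) > 0"
  shows "(\<integral>\<^sup>+z. ennreal (exp (- c * (norm (z::'a::euclidean_space))\<^sup>2)) \<partial>lborel)
     = ennreal (sqrt (pi / c) ^ DIM('a))"
proof -
  have "(\<integral>\<^sup>+z. ennreal (exp (- c * (norm (z::'a))\<^sup>2)) \<partial>lborel)
      = (\<integral>\<^sup>+z. (\<Prod>b\<in>Basis. ennreal (exp (- c * ((z::'a) \<bullet> b)\<^sup>2))) \<partial>lborel)"
  proof (rule nn_integral_cong)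
    fix z :: 'a
    have "exp (- c * (norm z)\<^sup>2) = exp (\<Sum>b\<in>Basis. - c * (z \<bullet> b)\<^sup>2)"
      by (simp add: norm_sq_Basis sum_distrib_left)
    also have "\<dots> = (\<Prod>b\<in>Basis. exp (- c * (z \<bullet> b)\<^sup>2))" by (simp add: exp_sum)
    finally show "ennreal (exp (- c * (norm z)\<^sup>2)) = (\<Prod>b\<in>Basis. ennreal (exp (- c * (z \<bullet> b)\<^sup>2)))"
      by (simp add: prod_ennreal)
  qed
  also have "\<dots> = (\<Prod>b\<in>(Basis::'a set). (\<integral>\<^sup>+t. ennreal (exp (- c * t\<^sup>2)) \<partial>lborel))"
    by (rule nn_integral_lborel_prod) auto
  also have "\<dots> = ennreal (sqrt (pi / c) ^ DIM('a))"
    using gauss1d[OF c] c by (simp add: ennreal_power)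
  finally show ?thesis .
qed

lemma exp_ennreal_layer:
  fixes e :: real assumes "0 < e" "e \<le> 1"
  shows "ennreal e = (\<integral>\<^sup>+t. indicator {0<..<1} t * (if t < e then 1 else 0) \<partial>lborel)"
proof -
  have "(\<integral>\<^sup>+t. indicator {0<..<1} t * (if t < e then 1 else 0) \<partial>lborel)
      = (\<integral>\<^sup>+t. indicator {0<..<e} t \<partial>lborel)"
    using assms by (intro nn_integral_cong) (auto split: split_indicator)
  also have "\<dots> = ennreal e" using assms by (simp add: emeasure_lborel_Ioo)
  finally show ?thesis by simp
qed

lemma layer_cake_gauss:
  fixes A :: "'a::euclidean_space set"
  assumes A[measurable]: "A \<in> sets borel"
  shows "(\<integral>\<^sup>+z. indicator A z * ennreal (exp (- pi * (norm z)\<^sup>2)) \<partial>lborel)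
     = (\<integral>\<^sup>+t. indicator {0<..<1} t * emeasure lborel (A \<inter> ball 0 (sqrt (- ln t / pi))) \<partial>lborel)"
proof -
  have psf: "pair_sigma_finite (lborel::'a measure) (lborel::real measure)"
    by (intro pair_sigma_finite.intro sigma_finite_lborel)
  let ?g = "\<lambda>z::'a. exp (- pi * (norm z)\<^sup>2)"
  have g01: "0 < ?g z" "?g z \<le> 1" for z by auto
  have "(\<integral>\<^sup>+z. indicator A z * ennreal (?g z) \<partial>lborel)
      = (\<integral>\<^sup>+z. (\<integral>\<^sup>+t. indicator A z * (indicator {0<..<1} t * (if t < ?g z then 1 else 0)) \<partial>lborel) \<partial>lborel)"
    apply (intro nn_integral_cong)
    apply (subst nn_integral_cmult)
     apply measurable
    apply (subst exp_ennreal_layer[OF g01])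
    apply simp
    done
  also have "\<dots> = (\<integral>\<^sup>+t. (\<integral>\<^sup>+z. indicator A z * (indicator {0<..<1} t * (if t < ?g z then 1 else 0)) \<partial>lborel) \<partial>lborel)"
    by (rule pair_sigma_finite.Fubini'[OF psf, symmetric]) measurable
  also have "\<dots> = (\<integral>\<^sup>+t. indicator {0<..<1} t * emeasure lborel (A \<inter> ball 0 (sqrt (- ln t / pi))) \<partial>lborel)"
  proof (intro nn_integral_cong)
    fix t :: real
    show "(\<integral>\<^sup>+z. indicator A z * (indicator {0<..<1} t * (if t < ?g z then 1 else 0)) \<partial>lborel)
      = indicator {0<..<1} t * emeasure lborel (A \<inter> ball 0 (sqrt (- ln t / pi)))"
    proof (cases "t \<in> {0<..<1}")
      case True
      have "(\<integral>\<^sup>+z. indicator A z * (indicator {0<..<1} t * (if t < ?g z then 1 else 0)) \<partial>lborel)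
          = (\<integral>\<^sup>+z. indicator (A \<inter> ball 0 (sqrt (- ln t / pi))) z \<partial>lborel)"
      proof (intro nn_integral_cong)
        fix z :: 'a
        have "t < ?g z \<longleftrightarrow> ln t < - pi * (norm z)\<^sup>2"
          using True by (subst ln_less_cancel_iff[symmetric]) auto
        also have "\<dots> \<longleftrightarrow> (norm z)\<^sup>2 < - ln t / pi"
          by (auto simp: field_simps)
        also have "\<dots> \<longleftrightarrow> norm z < sqrt (- ln t / pi)"
          using real_sqrt_less_iff[of "(norm z)\<^sup>2" "- ln t / pi"] by simp
        finally show "indicator A z * (indicator {0<..<1} t * (if t < ?g z then 1 else 0))
            = (indicator (A \<inter> ball 0 (sqrt (- ln t / pi))) z :: ennreal)"
          using True by (auto split: split_indicator simp: dist_norm)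
      qed
      also have "\<dots> = emeasure lborel (A \<inter> ball 0 (sqrt (- ln t / pi)))"
        by (rule nn_integral_indicator) measurable
      finally show ?thesis using True by simp
    qed simp
  qed
  finally show ?thesis .
qed

lemma emeasure_lebesgue_borel:
  "S \<in> sets borel \<Longrightarrow> emeasure lebesgue S = emeasure lborel S"
  by (simp add: emeasure_completion)

lemma cone_scale:
  fixes K :: "'a::euclidean_space set"
  assumes K[measurable]: "K \<in> sets borel" and cone: "\<And>v c. v \<in> K \<Longrightarrow> 0 < c \<Longrightarrow> c *\<^sub>R v \<in> K"
    and r: "r > 0"
  shows "emeasure lborel (K \<inter> ball 0 r) = ennreal (r ^ DIM('a)) * emeasure lborel (K \<inter> ball 0 1)"
proof -
  have eq: "K \<inter> ball 0 r = (\<lambda>v. r *\<^sub>R v + 0) ` (K \<inter> ball 0 1)"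
  proof safe
    fix y assume y: "y \<in> K" "y \<in> ball 0 r"
    have "(1/r) *\<^sub>R y \<in> K \<inter> ball 0 1" using cone[OF y(1), of "1/r"] y r
      by (auto simp: dist_norm field_simps)
    moreover have "y = r *\<^sub>R ((1/r) *\<^sub>R y) + 0" using r by simp
    ultimately show "y \<in> (\<lambda>v. r *\<^sub>R v + 0) ` (K \<inter> ball 0 1)" by blast
  next
    fix v assume "v \<in> K" "v \<in> ball 0 1"
    then show "r *\<^sub>R v + 0 \<in> K" "r *\<^sub>R v + 0 \<in> ball 0 r" using cone[of v r] r
      by (auto simp: dist_norm)
  qed
  have "emeasure lborel (K \<inter> ball 0 r) = emeasure lebesgue (K \<inter> ball 0 r)"
    by (simp add: emeasure_lebesgue_borel)
  also have "\<dots> = \<bar>r\<bar> ^ DIM('a) * emeasure lebesgue (K \<inter> ball 0 1)"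
    unfolding eq by (rule emeasure_lebesgue_affine)
  also have "\<dots> = ennreal (r ^ DIM('a)) * emeasure lborel (K \<inter> ball 0 1)"
    using r by (simp add: emeasure_lebesgue_borel)
  finally show ?thesis .
qed

lemma cone_gauss:
  fixes K :: "'a::euclidean_space set"
  assumes K[measurable]: "K \<in> sets borel" and cone: "\<And>v c. v \<in> K \<Longrightarrow> 0 < c \<Longrightarrow> c *\<^sub>R v \<in> K"
  shows "(\<integral>\<^sup>+z. indicator K z * ennreal (exp (- pi * (norm z)\<^sup>2)) \<partial>lborel)
     = ennreal (measure lborel (K \<inter> ball 0 1) / measure lborel (ball (0::'a) 1))"
proof -
  define I0 where "I0 = (\<integral>\<^sup>+t. indicator {0<..<1} t * ennreal (sqrt (- ln t / pi) ^ DIM('a)) \<partial>lborel)"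
  have gen: "(\<integral>\<^sup>+z. indicator L z * ennreal (exp (- pi * (norm z)\<^sup>2)) \<partial>lborel)
       = emeasure lborel (L \<inter> ball (0::'a) 1) * I0"
    if L[measurable]: "L \<in> sets borel" and coneL: "\<And>v c. v \<in> L \<Longrightarrow> 0 < c \<Longrightarrow> c *\<^sub>R v \<in> L" for L
  proof -
    have "(\<integral>\<^sup>+z. indicator L z * ennreal (exp (- pi * (norm z)\<^sup>2)) \<partial>lborel)
       = (\<integral>\<^sup>+t. indicator {0<..<1} t * emeasure lborel (L \<inter> ball 0 (sqrt (- ln t / pi))) \<partial>lborel)"
      by (rule layer_cake_gauss) simp
    also have "\<dots> = (\<integral>\<^sup>+t. indicator {0<..<1} t * ennreal (sqrt (- ln t / pi) ^ DIM('a)) * emeasure lborel (L \<inter> ball 0 1) \<partial>lborel)"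
    proof (intro nn_integral_cong)
      fix t :: real
      show "indicator {0<..<1} t * emeasure lborel (L \<inter> ball 0 (sqrt (- ln t / pi)))
        = indicator {0<..<1} t * ennreal (sqrt (- ln t / pi) ^ DIM('a)) * emeasure lborel (L \<inter> ball 0 1)"
      proof (cases "t \<in> {0<..<1}")
        case True
        then have "ln t < 0" by simp
        then have "sqrt (- ln t / pi) > 0" by (auto intro!: divide_neg_pos)
        then have cs: "emeasure lborel (L \<inter> ball 0 (sqrt (- ln t / pi)))
            = ennreal (sqrt (- ln t / pi) ^ DIM('a)) * emeasure lborel (L \<inter> ball 0 1)"
          using cone_scale[OF L coneL \<open>sqrt (- ln t / pi) > 0\<close>] by simp
        have ind: "indicator {0<..<1} t = (1::ennreal)" using True by simp
        show ?thesis unfolding ind cs by (simp only: mult_1 mult.assoc)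
      qed simp
    qed
    also have "\<dots> = I0 * emeasure lborel (L \<inter> ball 0 1)"
      unfolding I0_def by (rule nn_integral_multc) measurable
    finally show ?thesis by (simp add: mult.commute)
  qed
  have "1 = (\<integral>\<^sup>+z. indicator UNIV z * ennreal (exp (- pi * (norm (z::'a))\<^sup>2)) \<partial>lborel)"
    using gaussd[of pi, where 'a='a] by simp
  also have "\<dots> = emeasure lborel (ball (0::'a) 1) * I0"
    using gen[of UNIV] by simp
  finally have one: "emeasure lborel (ball (0::'a) 1) * I0 = 1" by simp
  define mB where "mB = measure lborel (ball (0::'a) 1)"
  define mK where "mK = measure lborel (K \<inter> ball (0::'a) 1)"
  have mB: "mB > 0" unfolding mB_def by simp
  have eB: "emeasure lborel (ball (0::'a) 1) = ennreal mB"
    unfolding mB_def using emeasure_lborel_ball_finite[of "0::'a" 1]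
    by (intro emeasure_eq_ennreal_measure) (simp add: less_top)
  have eK: "emeasure lborel (K \<inter> ball (0::'a) 1) = ennreal mK"
  proof -
    have "emeasure lborel (K \<inter> ball (0::'a) 1) \<le> emeasure lborel (ball (0::'a) 1)"
      by (intro emeasure_mono) auto
    then show ?thesis unfolding mK_def using emeasure_lborel_ball_finite[of "0::'a" 1]
      by (intro emeasure_eq_ennreal_measure) (auto simp: top_unique)
  qed
  have "I0 \<noteq> \<top>"
  proof
    assume "I0 = \<top>" then show False using one eB mB by (simp add: ennreal_mult_top)
  qed
  then obtain i where i: "I0 = ennreal i" "i \<ge> 0" by (cases I0) auto
  have "mB * i = 1" using one eB i mB by (simp flip: ennreal_mult)
  then have "i = 1 / mB" using mB by (simp add: field_simps)
  have "(\<integral>\<^sup>+z. indicator K z * ennreal (exp (- pi * (norm z)\<^sup>2)) \<partial>lborel) = ennreal mK * ennreal (1/mB)"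
    using gen[OF K cone] eK i \<open>i = 1/mB\<close> by simp
  also have "\<dots> = ennreal (mK / mB)" using mB by (simp flip: ennreal_mult add: mK_def)
  finally show ?thesis unfolding mK_def mB_def .
qed

lemma affine_eventually:
  fixes \<alpha> \<beta> b :: real
  shows "eventually (\<lambda>s. \<alpha> + s * \<beta> \<le> b \<longleftrightarrow> \<alpha> \<le> b \<and> (\<alpha> = b \<longrightarrow> \<beta> \<le> 0)) (at_right 0)"
proof -
  consider "\<alpha> < b" | "\<alpha> = b" | "\<alpha> > b" by linarith
  then show ?thesis
  proof cases
    case 1
    define \<delta> where "\<delta> = (b - \<alpha>) / (\<bar>\<beta>\<bar> + 1)"
    have \<delta>: "\<delta> > 0" using 1 by (simp add: \<delta>_def)
    show ?thesis unfolding eventually_at_right_field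
    proof (intro exI[of _ \<delta>] conjI allI impI)
      fix s :: real assume s: "0 < s" "s < \<delta>"
      have "s * \<beta> \<le> s * \<bar>\<beta>\<bar>" using s by (intro mult_left_mono) auto
      also have "\<dots> \<le> s * (\<bar>\<beta>\<bar> + 1)" using s by (intro mult_left_mono) auto
      also have "\<dots> < \<delta> * (\<bar>\<beta>\<bar> + 1)" using s by (intro mult_strict_right_mono) auto
      also have "\<dots> = b - \<alpha>" unfolding \<delta>_def by (simp add: field_simps add_pos_nonneg)
      finally show "\<alpha> + s * \<beta> \<le> b \<longleftrightarrow> \<alpha> \<le> b \<and> (\<alpha> = b \<longrightarrow> \<beta> \<le> 0)" using 1 by auto
    qed (fact \<delta>)
  next
    case 2
    show ?thesis unfolding eventually_at_right_field
    proof (intro exI[of _ 1] conjI allI impI)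
      fix s :: real assume s: "0 < s" "s < 1"
      show "\<alpha> + s * \<beta> \<le> b \<longleftrightarrow> \<alpha> \<le> b \<and> (\<alpha> = b \<longrightarrow> \<beta> \<le> 0)"
        using 2 s by (simp add: mult_le_0_iff)
    qed simp
  next
    case 3
    define \<delta> where "\<delta> = (\<alpha> - b) / (\<bar>\<beta>\<bar> + 1)"
    have \<delta>: "\<delta> > 0" using 3 by (simp add: \<delta>_def)
    show ?thesis unfolding eventually_at_right_field
    proof (intro exI[of _ \<delta>] conjI allI impI)
      fix s :: real assume s: "0 < s" "s < \<delta>"
      have "- (s * \<beta>) \<le> s * \<bar>\<beta>\<bar>" using s mult_left_mono[of "- \<beta>" "\<bar>\<beta>\<bar>" s] by simp
      also have "\<dots> \<le> s * (\<bar>\<beta>\<bar> + 1)" using s by (intro mult_left_mono) auto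
      also have "\<dots> < \<delta> * (\<bar>\<beta>\<bar> + 1)" using s by (intro mult_strict_right_mono) auto
      also have "\<dots> = \<alpha> - b" unfolding \<delta>_def by (simp add: field_simps add_pos_nonneg)
      finally show "\<alpha> + s * \<beta> \<le> b \<longleftrightarrow> \<alpha> \<le> b \<and> (\<alpha> = b \<longrightarrow> \<beta> \<le> 0)" using 3 by auto
    qed (fact \<delta>)
  qed
qed

definition tcone :: "('a::euclidean_space \<times> real) set \<Rightarrow> 'a \<Rightarrow> 'a set" where
  "tcone S x = {v. (\<forall>p\<in>S. fst p \<bullet> x \<le> snd p) \<and> (\<forall>p\<in>S. fst p \<bullet> x = snd p \<longrightarrow> fst p \<bullet> v \<le> 0)}"

lemma halfspaces_eventually:
  fixes S :: "('a::euclidean_space \<times> real) set"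
  assumes "finite S"
  shows "eventually (\<lambda>s. (x + s *\<^sub>R v \<in> {y. \<forall>p\<in>S. fst p \<bullet> y \<le> snd p}) \<longleftrightarrow> v \<in> tcone S x) (at_right 0)"
proof -
  have "eventually (\<lambda>s. \<forall>p\<in>S. (fst p \<bullet> x + s * (fst p \<bullet> v) \<le> snd p \<longleftrightarrow>
      fst p \<bullet> x \<le> snd p \<and> (fst p \<bullet> x = snd p \<longrightarrow> fst p \<bullet> v \<le> 0))) (at_right 0)"
    using assms by (intro eventually_ball_finite ballI affine_eventually)
  then show ?thesis
    by eventually_elim (auto simp: tcone_def inner_add_right)
qed

lemma tcone_cone: "v \<in> tcone S x \<Longrightarrow> 0 < c \<Longrightarrow> c *\<^sub>R v \<in> tcone S x"
  by (auto simp: tcone_def mult_le_0_iff)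

lemma tcone_borel:
  assumes "finite S"
  shows "tcone S x \<in> sets borel"
proof -
  have "tcone S x = {v. (\<forall>p\<in>S. fst p \<bullet> x \<le> snd p) \<and> (\<forall>p\<in>S. fst p \<bullet> x = snd p \<longrightarrow> fst p \<bullet> v \<le> 0)}"
    by (simp add: tcone_def)
  also have "\<dots> \<in> sets borel"
    using assms by measurable
  finally show ?thesis .
qed

lemma polytope_halfspaces:
  fixes P :: "'a::euclidean_space set"
  assumes "polytope P"
  obtains S :: "('a \<times> real) set" where "finite S" "P = {y. \<forall>p\<in>S. fst p \<bullet> y \<le> snd p}"
proof -
  from polytope_imp_polyhedron[OF assms] obtain F where F: "finite F" "P = \<Inter> F"
    "\<And>h. h \<in> F \<Longrightarrow> \<exists>a b. a \<noteq> 0 \<and> h = {x. a \<bullet> x \<le> b}"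
    unfolding polyhedron_def by blast
  define f where "f h = (SOME p. h = {x. fst p \<bullet> x \<le> snd p})" for h :: "'a set"
  have f: "h = {x. fst (f h) \<bullet> x \<le> snd (f h)}" if "h \<in> F" for h
  proof -
    from F(3)[OF that] obtain a b where "h = {x. a \<bullet> x \<le> b}" by blast
    then have "\<exists>p. h = {x. fst p \<bullet> x \<le> snd p}" by (intro exI[of _ "(a,b)"]) simp
    then show ?thesis unfolding f_def by (rule someI_ex)
  qed
  have "P = {y. \<forall>p\<in>f ` F. fst p \<bullet> y \<le> snd p}"
  proof -
    have "y \<in> P \<longleftrightarrow> (\<forall>h\<in>F. y \<in> h)" for y using F(2) by auto
    also have "\<dots> y \<longleftrightarrow> (\<forall>h\<in>F. fst (f h) \<bullet> y \<le> snd (f h))" for y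
      using f by blast
    finally show ?thesis by auto
  qed
  then show ?thesis using that F(1) by blast
qed

lemma conv_formula:
  fixes P :: "(real ^ 'n) set"
  assumes P[measurable]: "P \<in> sets borel" and e: "\<epsilon> > 0"
  shows "conv_ind_gauss P \<epsilon> x = integral\<^sup>L lborel (\<lambda>z. indicator P (x + sqrt \<epsilon> *\<^sub>R z) * exp (- pi * (norm z)\<^sup>2))"
proof -
  define c where "c = sqrt \<epsilon>"
  have c: "c > 0" using e by (simp add: c_def)
  let ?f = "\<lambda>y. indicator P y * gauss \<epsilon> (x - y)"
  let ?T = "\<lambda>z::real^'n. x + c *\<^sub>R z"
  have fm[measurable]: "?f \<in> borel_measurable borel" unfolding gauss_def by measurable
  have eq: "lborel = density (distr lborel borel ?T) (\<lambda>_. ennreal (\<bar>c\<bar> ^ DIM(real^'n)))"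
    using c by (intro lborel_affine) simp
  have "conv_ind_gauss P \<epsilon> x = integral\<^sup>L lborel ?f" unfolding conv_ind_gauss_def ..
  also have "\<dots> = integral\<^sup>L (density (distr lborel borel ?T) (\<lambda>_. ennreal (\<bar>c\<bar> ^ DIM(real^'n)))) ?f"
    by (rule arg_cong[where f="\<lambda>M. integral\<^sup>L M ?f", OF eq])
  also have "\<dots> = integral\<^sup>L (distr lborel borel ?T) (\<lambda>y. \<bar>c\<bar> ^ DIM(real^'n) *\<^sub>R ?f y)"
    by (rule integral_density) auto
  also have "\<dots> = integral\<^sup>L lborel (\<lambda>z. \<bar>c\<bar> ^ DIM(real^'n) *\<^sub>R ?f (?T z))"
    by (rule integral_distr) auto
  also have "\<dots> = integral\<^sup>L lborel (\<lambda>z. indicator P (x + sqrt \<epsilon> *\<^sub>R z) * exp (- pi * (norm z)\<^sup>2))"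
  proof (intro Bochner_Integration.integral_cong refl)
    fix z :: "real^'n"
    have n: "(norm (x - ?T z))\<^sup>2 = \<epsilon> * (norm z)\<^sup>2"
      using c e by (simp add: c_def power_mult_distrib)
    have p: "\<bar>c\<bar> ^ DIM(real^'n) * \<epsilon> powr (- real CARD('n) / 2) = 1"
    proof -
      have "c = \<epsilon> powr (1/2)" using e by (simp add: c_def powr_half_sqrt)
      then have "\<bar>c\<bar> ^ DIM(real^'n) = \<epsilon> powr (real CARD('n) / 2)"
        using e c by (simp add: powr_power)
      then show ?thesis using e by (simp flip: powr_add)
    qed
    show "\<bar>c\<bar> ^ DIM(real^'n) *\<^sub>R ?f (?T z) = indicator P (x + sqrt \<epsilon> *\<^sub>R z) * exp (- pi * (norm z)\<^sup>2)"
      unfolding gauss_def n using e p by (simp add: c_def)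
  qed
  finally show ?thesis .
qed

lemma sqrt_inverse_at_top: "filterlim (\<lambda>t. sqrt (inverse t)) (at_right 0) at_top"
proof -
  have "((\<lambda>t. sqrt (inverse t)) \<longlongrightarrow> sqrt 0) at_top"
    by (intro tendsto_real_sqrt tendsto_inverse_0_at_top filterlim_ident)
  moreover have "eventually (\<lambda>t::real. sqrt (inverse t) > 0) at_top"
    using eventually_gt_at_top[of 0] by eventually_elim simp
  ultimately show ?thesis
    by (intro tendsto_imp_filterlim_at_right) auto
qed

lemma gauss_integrable: "integrable lborel (\<lambda>z::'a::euclidean_space. exp (- c * (norm z)\<^sup>2))" if "c > 0"
proof (rule integrableI_bounded)
  show "(\<integral>\<^sup>+z. ennreal (norm (exp (- c * (norm (z::'a))\<^sup>2))) \<partial>lborel) < \<infinity>"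
    using gaussd[OF that, where 'a='a] by simp
qed measurable

lemma cone_gauss_integral:
  fixes K :: "'a::euclidean_space set"
  assumes K[measurable]: "K \<in> sets borel" and cone: "\<And>v c. v \<in> K \<Longrightarrow> 0 < c \<Longrightarrow> c *\<^sub>R v \<in> K"
  shows "integral\<^sup>L lborel (\<lambda>z. indicator K z * exp (- pi * (norm z)\<^sup>2))
     = measure lborel (K \<inter> ball 0 1) / measure lborel (ball (0::'a) 1)"
proof -
  have "integral\<^sup>L lborel (\<lambda>z. indicator K z * exp (- pi * (norm z)\<^sup>2))
     = enn2real (\<integral>\<^sup>+z. ennreal (indicator K z * exp (- pi * (norm z)\<^sup>2)) \<partial>lborel)"
    by (rule integral_eq_nn_integral) auto
  also have "(\<integral>\<^sup>+z. ennreal (indicator K z * exp (- pi * (norm z)\<^sup>2)) \<partial>lborel)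
      = (\<integral>\<^sup>+z. indicator K z * ennreal (exp (- pi * (norm (z::'a))\<^sup>2)) \<partial>lborel)"
    by (intro nn_integral_cong) (simp split: split_indicator)
  also have "\<dots> = ennreal (measure lborel (K \<inter> ball 0 1) / measure lborel (ball (0::'a) 1))"
    by (rule cone_gauss[OF K cone])
  finally show ?thesis by simp
qed

lemma conv_limit:
  fixes S :: "((real ^ 'n) \<times> real) set"
  assumes S: "finite S" and Pdef: "P = {y. \<forall>p\<in>S. fst p \<bullet> y \<le> snd p}"
  shows "((\<lambda>\<epsilon>. conv_ind_gauss P \<epsilon> x) \<longlongrightarrow>
      measure lborel (tcone S x \<inter> ball 0 1) / measure lborel (ball (0::real^'n) 1)) (at_right 0)"
proof -
  have P[measurable]: "P \<in> sets borel" unfolding Pdef using S by measurable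
  define K where "K = tcone S x"
  have K[measurable]: "K \<in> sets borel" unfolding K_def using S by (rule tcone_borel)
  let ?g = "\<lambda>z::real^'n. exp (- pi * (norm z)\<^sup>2)"
  have V: "integral\<^sup>L lborel (\<lambda>z. indicator K z * ?g z)
     = measure lborel (tcone S x \<inter> ball 0 1) / measure lborel (ball (0::real^'n) 1)"
    unfolding K_def by (rule cone_gauss_integral[OF tcone_borel[OF S] tcone_cone])
  have lim: "((\<lambda>t. integral\<^sup>L lborel (\<lambda>z. indicator P (x + sqrt (inverse t) *\<^sub>R z) * ?g z))
      \<longlongrightarrow> integral\<^sup>L lborel (\<lambda>z. indicator K z * ?g z)) at_top"
  proof (rule integral_dominated_convergence_at_top[where w = ?g])
    show "integrable lborel ?g" by (rule gauss_integrable) simp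
    show "AE z in lborel. ((\<lambda>t. indicator P (x + sqrt (inverse t) *\<^sub>R z) * ?g z) \<longlongrightarrow> indicator K z * ?g z) at_top"
    proof (intro AE_I2 tendsto_eventually)
      fix z :: "real^'n"
      have "eventually (\<lambda>s. (x + s *\<^sub>R z \<in> P) \<longleftrightarrow> z \<in> K) (at_right 0)"
        unfolding Pdef K_def by (rule halfspaces_eventually[OF S])
      from filterlim_iff[THEN iffD1, OF sqrt_inverse_at_top, rule_format, OF this]
      show "eventually (\<lambda>t. indicator P (x + sqrt (inverse t) *\<^sub>R z) * ?g z = indicator K z * ?g z) at_top"
        by eventually_elim (simp split: split_indicator)
    qed
    show "\<forall>\<^sub>F t in at_top. AE z in lborel. norm (indicator P (x + sqrt (inverse t) *\<^sub>R z) * ?g z) \<le> ?g z"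
      by (intro always_eventually allI AE_I2) (simp split: split_indicator)
  qed measurable
  have "((\<lambda>\<epsilon>. integral\<^sup>L lborel (\<lambda>z. indicator P (x + sqrt \<epsilon> *\<^sub>R z) * ?g z))
      \<longlongrightarrow> integral\<^sup>L lborel (\<lambda>z. indicator K z * ?g z)) (at_right 0)"
    unfolding filterlim_at_right_to_top using lim by simp
  then have "((\<lambda>\<epsilon>. conv_ind_gauss P \<epsilon> x) \<longlongrightarrow> integral\<^sup>L lborel (\<lambda>z. indicator K z * ?g z)) (at_right 0)"
  proof (rule Lim_transform_eventually)
    show "eventually (\<lambda>\<epsilon>. integral\<^sup>L lborel (\<lambda>z. indicator P (x + sqrt \<epsilon> *\<^sub>R z) * ?g z) = conv_ind_gauss P \<epsilon> x) (at_right 0)"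
      using eventually_at_right_less[of 0] by eventually_elim (simp add: conv_formula[OF P])
  qed
  then show ?thesis using V by simp
qed



lemma measure_ball_inter_scale:
  fixes Q :: "(real ^ 'n) set"
  assumes Q[measurable]: "Q \<in> sets borel" and r: "r > 0"
  shows "measure lebesgue (ball x r \<inter> Q) = r ^ CARD('n) * measure lborel (ball 0 1 \<inter> {v. x + r *\<^sub>R v \<in> Q})"
proof -
  have eq: "ball x r \<inter> Q = (\<lambda>v. r *\<^sub>R v + x) ` (ball 0 1 \<inter> {v. x + r *\<^sub>R v \<in> Q})"
  proof safe
    fix y assume y: "y \<in> ball x r" "y \<in> Q"
    have "norm ((1/r) *\<^sub>R (y - x)) = norm (y - x) / r" using r by simp
    also have "\<dots> < 1" using y r by (simp add: dist_norm norm_minus_commute)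
    finally have "(1/r) *\<^sub>R (y - x) \<in> ball 0 1 \<inter> {v. x + r *\<^sub>R v \<in> Q}" using y r
      by (simp add: dist_norm)
    moreover have "y = r *\<^sub>R ((1/r) *\<^sub>R (y - x)) + x" using r by simp
    ultimately show "y \<in> (\<lambda>v. r *\<^sub>R v + x) ` (ball 0 1 \<inter> {v. x + r *\<^sub>R v \<in> Q})" by blast
  next
    fix v assume "v \<in> ball 0 1" "x + r *\<^sub>R v \<in> Q"
    then show "r *\<^sub>R v + x \<in> ball x r" "r *\<^sub>R v + x \<in> Q" using r
      by (auto simp: dist_norm add.commute)
  qed
  have m: "ball 0 1 \<inter> {v. x + r *\<^sub>R v \<in> Q} \<in> sets borel" by measurable
  show ?thesis unfolding eq measure_lebesgue_affine using r m by simp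
qed

lemma solid_angle_eq:
  fixes S :: "((real ^ 'n) \<times> real) set"
  assumes S: "finite S" and Pdef: "P = {y. \<forall>p\<in>S. fst p \<bullet> y \<le> snd p}"
  shows "solid_angle P x = measure lborel (tcone S x \<inter> ball 0 1) / measure lborel (ball (0::real^'n) 1)"
proof -
  have P[measurable]: "P \<in> sets borel" unfolding Pdef using S by measurable
  define K where "K = tcone S x"
  have K[measurable]: "K \<in> sets borel" unfolding K_def using S by (rule tcone_borel)
  define B where "B = ball (0::real^'n) 1"
  have B[measurable]: "B \<in> sets borel" unfolding B_def by simp
  have Bfin: "emeasure lborel B < \<infinity>" unfolding B_def by (rule emeasure_lborel_ball_finite)
  have mB: "measure lborel B > 0" unfolding B_def by simp
  have lim: "((\<lambda>t. integral\<^sup>L lborel (\<lambda>v. indicator B v * indicator P (x + inverse t *\<^sub>R v) :: real))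
      \<longlongrightarrow> integral\<^sup>L lborel (\<lambda>v. indicator B v * indicator K v :: real)) at_top"
  proof (rule integral_dominated_convergence_at_top[where w = "indicator B"])
    show "integrable lborel (indicator B :: _ \<Rightarrow> real)" using Bfin by simp
    show "AE v in lborel. ((\<lambda>t. indicator B v * indicator P (x + inverse t *\<^sub>R v) :: real) \<longlongrightarrow> indicator B v * indicator K v) at_top"
    proof (intro AE_I2 tendsto_eventually)
      fix v :: "real^'n"
      have "eventually (\<lambda>s. (x + s *\<^sub>R v \<in> P) \<longleftrightarrow> v \<in> K) (at_right 0)"
        unfolding Pdef K_def by (rule halfspaces_eventually[OF S])
      from filterlim_iff[THEN iffD1, OF filterlim_inverse_at_right_top, rule_format, OF this]
      show "eventually (\<lambda>t. indicator B v * indicator P (x + inverse t *\<^sub>R v) = (indicator B v * indicator K v :: real)) at_top"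
        by eventually_elim (simp split: split_indicator)
    qed
    show "\<forall>\<^sub>F t in at_top. AE v in lborel. norm (indicator B v * indicator P (x + inverse t *\<^sub>R v) :: real) \<le> indicator B v"
      by (intro always_eventually allI AE_I2) (simp split: split_indicator)
  qed measurable
  have lim2: "((\<lambda>r. integral\<^sup>L lborel (\<lambda>v. indicator B v * indicator P (x + r *\<^sub>R v) :: real) / measure lborel B)
      \<longlongrightarrow> integral\<^sup>L lborel (\<lambda>v. indicator B v * indicator K v :: real) / measure lborel B) (at_right 0)"
    unfolding filterlim_at_right_to_top using lim by (intro tendsto_divide tendsto_const) (use mB in auto)
  have "((\<lambda>r. measure lebesgue (ball x r \<inter> P) / measure lebesgue (ball x r))
      \<longlongrightarrow> integral\<^sup>L lborel (\<lambda>v. indicator B v * indicator K v :: real) / measure lborel B) (at_right 0)"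
    using lim2
  proof (rule Lim_transform_eventually)
    show "eventually (\<lambda>r. integral\<^sup>L lborel (\<lambda>v. indicator B v * indicator P (x + r *\<^sub>R v) :: real) / measure lborel B
        = measure lebesgue (ball x r \<inter> P) / measure lebesgue (ball x r)) (at_right 0)"
      using eventually_at_right_less[of 0]
    proof eventually_elim
      case (elim r)
      have "measure lebesgue (ball x r \<inter> P) = r ^ CARD('n) * measure lborel (B \<inter> {v. x + r *\<^sub>R v \<in> P})"
        unfolding B_def using elim by (intro measure_ball_inter_scale) auto
      also have "measure lborel (B \<inter> {v. x + r *\<^sub>R v \<in> P}) = integral\<^sup>L lborel (\<lambda>v. indicator B v * indicator P (x + r *\<^sub>R v) :: real)"
      proof -
        have "(\<lambda>v. indicator B v * indicator P (x + r *\<^sub>R v) :: real) = indicator (B \<inter> {v. x + r *\<^sub>R v \<in> P})"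
          by (auto simp: fun_eq_iff split: split_indicator)
        then show ?thesis by simp
      qed
      finally have 1: "measure lebesgue (ball x r \<inter> P) = r ^ CARD('n) * integral\<^sup>L lborel (\<lambda>v. indicator B v * indicator P (x + r *\<^sub>R v) :: real)" .
      have "measure lebesgue (ball x r) = measure lebesgue (ball x r \<inter> UNIV)" by simp
      also have "\<dots> = r ^ CARD('n) * measure lborel (B \<inter> {v. x + r *\<^sub>R v \<in> UNIV})"
        unfolding B_def using elim by (intro measure_ball_inter_scale) auto
      finally have 2: "measure lebesgue (ball x r) = r ^ CARD('n) * measure lborel B" by simp
      show ?case unfolding 1 2 using elim by simp
    qed
  qed
  then have "solid_angle P x = integral\<^sup>L lborel (\<lambda>v. indicator B v * indicator K v :: real) / measure lborel B"
    unfolding solid_angle_def by (intro tendsto_Lim) auto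
  also have "integral\<^sup>L lborel (\<lambda>v. indicator B v * indicator K v :: real) = measure lborel (tcone S x \<inter> ball 0 1)"
    by (simp add: indicator_inter_arith[symmetric] K_def B_def Int_commute)
  finally show ?thesis unfolding B_def .
qed



lemma int_gauss_summable:
  assumes c: "(c::real) > 0"
  shows "(\<lambda>k::int. exp (- c * (real_of_int k)\<^sup>2)) summable_on UNIV"
proof -
  define q where "q = exp (- c)"
  have q: "0 < q" "q < 1" using c by (auto simp: q_def)
  have geo: "(\<lambda>n::nat. q ^ n) summable_on UNIV"
    using q by (subst summable_on_UNIV_nonneg_real_iff) (auto intro: summable_geometric)
  have b1: "exp (- c * (real n)\<^sup>2) \<le> q ^ n" for n :: nat
  proof -
    have "real n \<le> (real n)\<^sup>2" by (cases n) (auto simp: power2_eq_square)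
    then have "- c * (real n)\<^sup>2 \<le> - c * real n" using c by simp
    then show ?thesis by (simp add: q_def exp_of_nat_mult[symmetric] mult.commute)
  qed
  have b2: "exp (- c * (real n + 1)\<^sup>2) \<le> q ^ n" for n :: nat
  proof -
    have "real n \<le> (real n + 1)\<^sup>2" by (auto simp: power2_eq_square algebra_simps)
    then have "- c * (real n + 1)\<^sup>2 \<le> - c * real n" using c by simp
    then show ?thesis by (simp add: q_def exp_of_nat_mult[symmetric] mult.commute)
  qed
  have s1: "(\<lambda>k::int. exp (- c * (real_of_int k)\<^sup>2)) summable_on range int"
  proof -
    have "(\<lambda>n::nat. exp (- c * (real_of_int (int n))\<^sup>2)) summable_on UNIV"
      by (rule summable_on_comparison_test[OF geo]) (use b1 in auto)
    then show ?thesis by (subst summable_on_reindex) (auto simp: o_def)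
  qed
  have s2: "(\<lambda>k::int. exp (- c * (real_of_int k)\<^sup>2)) summable_on range (\<lambda>n::nat. - int n - 1)"
  proof -
    have "(\<lambda>n::nat. exp (- c * (real_of_int (- int n - 1))\<^sup>2)) summable_on UNIV"
    proof (rule summable_on_comparison_test[OF geo])
      fix n :: nat
      have "(real_of_int (- int n - 1))\<^sup>2 = (real n + 1)\<^sup>2" by (simp add: power2_eq_square algebra_simps)
      then show "exp (- c * (real_of_int (- int n - 1))\<^sup>2) \<le> q ^ n" using b2[of n] by simp
    qed auto
    then show ?thesis by (subst summable_on_reindex) (auto simp: o_def inj_on_def)
  qed
  have "UNIV = range int \<union> range (\<lambda>n::nat. - int n - 1)"
  proof safe
    fix k :: int assume "k \<notin> range (\<lambda>n::nat. - int n - 1)"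
    then have "k \<ge> 0"
    proof (rule contrapos_np)
      assume "\<not> k \<ge> 0"
      then have "k = - int (nat (- k - 1)) - 1" by simp
      then show "k \<in> range (\<lambda>n::nat. - int n - 1)" by blast
    qed
    then show "k \<in> range int" by (metis nonneg_int_cases rangeI)
  qed auto
  moreover have "range int \<inter> range (\<lambda>n::nat. - int n - 1) = {}" by auto
  ultimately show ?thesis using summable_on_Un_disjoint[OF s1 s2] by simp
qed

lemma norm_sq_vec: "(norm (x::real^'n))\<^sup>2 = (\<Sum>i\<in>UNIV. (x$i)\<^sup>2)"
  unfolding power2_norm_eq_inner inner_vec_def by (simp add: power2_eq_square)

lemma lattice_floor: "x \<in> lattice_points \<Longrightarrow> real_of_int \<lfloor>x$i\<rfloor> = x$i"
  unfolding lattice_points_def by (auto elim!: Ints_cases)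

lemma lattice_gauss_summable:
  assumes c: "(c::real) > 0"
  shows "(\<lambda>x::real^'n. exp (- c * (norm x)\<^sup>2)) summable_on lattice_points"
proof (rule nonneg_bdd_above_summable_on)
  define h where "h k = exp (- c * (real_of_int k)\<^sup>2)" for k :: int
  have hs: "h summable_on UNIV" unfolding h_def by (rule int_gauss_summable[OF c])
  define S1 where "S1 = infsum h UNIV"
  show "bdd_above (sum (\<lambda>x::real^'n. exp (- c * (norm x)\<^sup>2)) ` {F. F \<subseteq> lattice_points \<and> finite F})"
  proof (rule bdd_aboveI, safe)
    fix F :: "(real^'n) set" assume F: "F \<subseteq> lattice_points" "finite F"
    define \<phi> where "\<phi> x = (\<lambda>i. \<lfloor>x$i\<rfloor>)" for x :: "real^'n"
    define G where "G = (\<Union>x\<in>F. range (\<phi> x))"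
    have G: "finite G" unfolding G_def using F by auto
    have f_eq: "exp (- c * (norm x)\<^sup>2) = (\<Prod>i\<in>UNIV. h (\<phi> x i))" if "x \<in> lattice_points" for x
    proof -
      have "exp (- c * (norm x)\<^sup>2) = exp (\<Sum>i\<in>UNIV. - c * (x$i)\<^sup>2)"
        by (simp add: norm_sq_vec sum_distrib_left)
      also have "\<dots> = (\<Prod>i\<in>UNIV. exp (- c * (x$i)\<^sup>2))" by (simp add: exp_sum)
      finally show ?thesis using that by (simp add: h_def \<phi>_def lattice_floor)
    qed
    have inj: "inj_on \<phi> F"
    proof (rule inj_onI)
      fix x y assume xy: "x \<in> F" "y \<in> F" "\<phi> x = \<phi> y"
      show "x = y"
      proof (rule vec_eq_iff[THEN iffD2], rule allI)
        fix i
        have "\<lfloor>x$i\<rfloor> = \<lfloor>y$i\<rfloor>" using xy(3) unfolding \<phi>_def by meson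
        moreover have "x \<in> lattice_points" "y \<in> lattice_points" using xy F by auto
        ultimately show "x$i = y$i" using lattice_floor[of x i] lattice_floor[of y i] by metis
      qed
    qed
    have "sum (\<lambda>x. exp (- c * (norm x)\<^sup>2)) F = sum (\<lambda>x. \<Prod>i\<in>UNIV. h (\<phi> x i)) F"
      using F f_eq by (intro sum.cong) auto
    also have "\<dots> = sum (\<lambda>f. \<Prod>i\<in>UNIV. h (f i)) (\<phi> ` F)"
      using inj by (simp add: sum.reindex)
    also have "\<dots> \<le> sum (\<lambda>f. \<Prod>i\<in>UNIV. h (f i)) (PiE UNIV (\<lambda>_::'n. G))"
    proof (rule sum_mono2)
      show "finite (PiE UNIV (\<lambda>_::'n. G))" using G by (intro finite_PiE) auto
      show "\<phi> ` F \<subseteq> PiE UNIV (\<lambda>_::'n. G)" unfolding G_def by auto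
    qed (auto simp: h_def intro!: prod_nonneg)
    also have "\<dots> = (\<Prod>i\<in>(UNIV::'n set). \<Sum>k\<in>G. h k)"
      using G by (subst prod_sum_PiE) auto
    also have "\<dots> \<le> (\<Prod>i\<in>(UNIV::'n set). S1)"
    proof (rule prod_mono, safe)
      show "0 \<le> sum h G" by (auto simp: h_def intro!: sum_nonneg)
      show "sum h G \<le> S1" unfolding S1_def using G hs
        by (intro finite_sum_le_infsum) (auto simp: h_def)
    qed
    finally show "sum (\<lambda>x. exp (- c * (norm x)\<^sup>2)) F \<le> (\<Prod>i\<in>(UNIV::'n set). S1)" .
  qed
qed auto

lemma lattice_bounded_finite:
  "finite {x \<in> lattice_points. norm (x::real^'n) < M}"
proof -
  define N where "N = \<lceil>M\<rceil>"
  define A where "A = PiE (UNIV::'n set) (\<lambda>_. {-N..N})"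
  have "{x \<in> lattice_points. norm (x::real^'n) < M} \<subseteq> (\<lambda>f. \<chi> i. real_of_int (f i)) ` A"
  proof safe
    fix x :: "real^'n" assume x: "x \<in> lattice_points" "norm x < M"
    have "\<bar>x$i\<bar> \<le> norm x" for i by (rule component_le_norm_cart)
    have b: "\<bar>\<lfloor>x$i\<rfloor>\<bar> \<le> N" for i
    proof -
      have "real_of_int \<bar>\<lfloor>x$i\<rfloor>\<bar> = \<bar>x$i\<bar>" by (simp only: of_int_abs lattice_floor[OF x(1)])
      also have "\<dots> \<le> real_of_int N"
        using \<open>\<bar>x$i\<bar> \<le> norm x\<close> x(2) le_of_int_ceiling[of M] unfolding N_def by linarith
      finally show ?thesis by (simp only: of_int_le_iff)
    qed
    have b2: "\<lfloor>x$i\<rfloor> \<in> {-N..N}" for i using b[of i] by (auto simp: abs_le_iff)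
    have "(\<lambda>i. \<lfloor>x$i\<rfloor>) \<in> A" unfolding A_def using b2 by auto
    moreover have "x = (\<chi> i. real_of_int ((\<lambda>i. \<lfloor>x$i\<rfloor>) i))"
      by (simp add: vec_eq_iff lattice_floor[OF x(1)])
    ultimately show "x \<in> (\<lambda>f. \<chi> i. real_of_int (f i)) ` A"
      by (intro image_eqI[where x="\<lambda>i. \<lfloor>x$i\<rfloor>"]) auto
  qed
  moreover have "finite A" unfolding A_def by (intro finite_PiE) auto
  ultimately show ?thesis by (meson finite_imageI finite_subset)
qed



lemma lin_helper1: "(a::real) \<le> b \<Longrightarrow> - b \<le> - a / 2 + - b / 2" by linarith
lemma lin_helper2: "(a::real) * x - a * r \<le> a * d \<Longrightarrow> - (a * d) \<le> a * r + - (a * x)" by linarith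
lemma lin_helper4: "(a::real) * u + (a * X - a * r) \<le> a * q \<Longrightarrow> - (a * q) \<le> a * r + - (a * u) + - (a * X)" by linarith
lemma lin_helper3: "(q::real) = a + a * u \<Longrightarrow> 1 * u \<le> a * u \<Longrightarrow> X \<le> a \<Longrightarrow> u + X \<le> q" by linarith

lemma conv_nonneg: "0 \<le> conv_ind_gauss P \<epsilon> x"
  unfolding conv_ind_gauss_def gauss_def
  by (intro Bochner_Integration.integral_nonneg) auto

lemma gauss_integral_half:
  "integral\<^sup>L lborel (\<lambda>z::'a::euclidean_space. exp (- (pi/2) * (norm z)\<^sup>2)) = sqrt 2 ^ DIM('a)"
proof -
  have "integral\<^sup>L lborel (\<lambda>z::'a. exp (- (pi/2) * (norm z)\<^sup>2))
      = enn2real (\<integral>\<^sup>+z. ennreal (exp (- (pi/2) * (norm (z::'a))\<^sup>2)) \<partial>lborel)"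
    by (rule integral_eq_nn_integral) auto
  also have "\<dots> = sqrt (pi / (pi/2)) ^ DIM('a)"
    by (subst gaussd) auto
  finally show ?thesis by simp
qed

lemma conv_bound:
  fixes P :: "(real ^ 'n) set"
  assumes P[measurable]: "P \<in> sets borel" and R: "\<And>y. y \<in> P \<Longrightarrow> norm y \<le> R"
    and e: "\<epsilon> > 0" and D: "0 \<le> D" "D \<le> max 0 (norm x - R)"
  shows "conv_ind_gauss P \<epsilon> x \<le> sqrt 2 ^ CARD('n) * exp (- pi * D\<^sup>2 / (2*\<epsilon>))"
proof -
  let ?g = "\<lambda>z::real^'n. exp (- pi * (norm z)\<^sup>2)"
  let ?h = "\<lambda>z::real^'n. exp (- (pi/2) * (norm z)\<^sup>2)"
  have gi: "integrable lborel ?g" by (rule gauss_integrable) simp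
  have hi: "integrable lborel ?h" by (rule gauss_integrable) simp
  have "conv_ind_gauss P \<epsilon> x = integral\<^sup>L lborel (\<lambda>z. indicator P (x + sqrt \<epsilon> *\<^sub>R z) * ?g z)"
    by (rule conv_formula[OF P e])
  also have "\<dots> \<le> integral\<^sup>L lborel (\<lambda>z. exp (- pi * D\<^sup>2 / (2*\<epsilon>)) * ?h z)"
  proof (rule integral_mono)
    show "integrable lborel (\<lambda>z. indicator P (x + sqrt \<epsilon> *\<^sub>R z) * ?g z)"
      by (rule Bochner_Integration.integrable_bound[OF gi]) (auto split: split_indicator)
    show "integrable lborel (\<lambda>z. exp (- pi * D\<^sup>2 / (2*\<epsilon>)) * ?h z)"
      by (intro integrable_mult_right hi)
    fix z :: "real^'n"
    show "indicator P (x + sqrt \<epsilon> *\<^sub>R z) * ?g z \<le> exp (- pi * D\<^sup>2 / (2*\<epsilon>)) * ?h z"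
    proof (cases "x + sqrt \<epsilon> *\<^sub>R z \<in> P")
      case True
      have "norm x \<le> norm (x + sqrt \<epsilon> *\<^sub>R z) + norm (sqrt \<epsilon> *\<^sub>R z)"
        by (metis add_diff_cancel norm_triangle_ineq4)
      also have "\<dots> \<le> R + sqrt \<epsilon> * norm z" using R[OF True] e by simp
      finally have "norm x - R \<le> sqrt \<epsilon> * norm z" by simp
      moreover have "0 \<le> sqrt \<epsilon> * norm z" using e by simp
      ultimately have "D \<le> sqrt \<epsilon> * norm z" using D by linarith
      then have "D\<^sup>2 \<le> (sqrt \<epsilon> * norm z)\<^sup>2" using D by (intro power_mono) auto
      also have "\<dots> = \<epsilon> * (norm z)\<^sup>2" using e by (simp add: power_mult_distrib)
      finally have "D\<^sup>2 / \<epsilon> \<le> (norm z)\<^sup>2" using e by (simp add: divide_le_eq mult.commute)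
      then have "pi * (D\<^sup>2 / \<epsilon>) \<le> pi * (norm z)\<^sup>2" by (intro mult_left_mono) auto
      moreover have "- pi * D\<^sup>2 / (2*\<epsilon>) = - (pi * (D\<^sup>2 / \<epsilon>)) / 2" by simp
      moreover have "- pi * (norm z)\<^sup>2 = - (pi * (norm z)\<^sup>2)" "- (pi/2) * (norm z)\<^sup>2 = - (pi * (norm z)\<^sup>2) / 2"
        by simp_all
      ultimately have "- pi * (norm z)\<^sup>2 \<le> - pi * D\<^sup>2 / (2*\<epsilon>) + - (pi/2) * (norm z)\<^sup>2"
        by (metis lin_helper1)
      then have "?g z \<le> exp (- pi * D\<^sup>2 / (2*\<epsilon>) + - (pi/2) * (norm z)\<^sup>2)"
        by (subst exp_le_cancel_iff)
      then have gle: "?g z \<le> exp (- pi * D\<^sup>2 / (2*\<epsilon>)) * ?h z" by (simp only: exp_add)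
      have "indicator P (x + sqrt \<epsilon> *\<^sub>R z) * ?g z = ?g z" using True by simp
      also note gle
      finally show ?thesis .
    qed simp
  qed
  also have "\<dots> = exp (- pi * D\<^sup>2 / (2*\<epsilon>)) * sqrt 2 ^ CARD('n)"
    using gauss_integral_half[where 'a="real^'n"] by simp
  finally show ?thesis by (simp add: mult.commute)
qed


lemma D_bound1:
  assumes n: "0 \<le> (n::real)"
  shows "n\<^sup>2 / 2 - R\<^sup>2 \<le> (max 0 (n - R))\<^sup>2"
proof (cases "n \<ge> R")
  case True
  have "(n - R)\<^sup>2 - (n\<^sup>2 / 2 - R\<^sup>2) = (n - 2*R)\<^sup>2 / 2"
    by (simp add: power2_eq_square field_simps)
  moreover have "(max 0 (n - R))\<^sup>2 = (n - R)\<^sup>2" using True by simp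
  ultimately show ?thesis using zero_le_power2[of "n - 2*R"] by linarith
next
  case False
  then have "n\<^sup>2 \<le> R\<^sup>2" using n by (intro power_mono) auto
  then have "n\<^sup>2 / 2 - R\<^sup>2 \<le> 0" using zero_le_power2[of R] by linarith
  moreover have "max 0 (n - R) = 0" using False by simp
  ultimately show ?thesis by simp
qed

lemma tail_exp_limit: "((\<lambda>\<epsilon>::real. C * exp (- pi * (1/\<epsilon> - 1) / 2)) \<longlongrightarrow> 0) (at_right 0)"
proof -
  have "filterlim (\<lambda>\<epsilon>::real. (- pi / 2) * inverse \<epsilon>) at_bot (at_right 0)"
    by (rule filterlim_tendsto_neg_mult_at_bot[OF tendsto_const _ filterlim_inverse_at_top_right]) simp
  then have "filterlim (\<lambda>\<epsilon>::real. pi / 2 + (- pi / 2) * inverse \<epsilon>) at_bot (at_right 0)"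
    by (subst filterlim_tendsto_add_at_bot_iff[OF tendsto_const])
  then have "((\<lambda>\<epsilon>::real. exp (pi / 2 + (- pi / 2) * inverse \<epsilon>)) \<longlongrightarrow> 0) (at_right 0)"
    by (rule filterlim_compose[OF exp_at_bot])
  then have "((\<lambda>\<epsilon>::real. C * exp (pi / 2 + (- pi / 2) * inverse \<epsilon>)) \<longlongrightarrow> C * 0) (at_right 0)"
    by (intro tendsto_mult tendsto_const)
  moreover have "pi / 2 + (- pi / 2) * inverse \<epsilon> = - pi * (1/\<epsilon> - 1) / 2" for \<epsilon> :: real
    by (simp add: inverse_eq_divide right_diff_distrib)
  ultimately show ?thesis by simp
qed

theorem theorem4p2:
  fixes P :: "(real ^ 'n) set"
  assumes "polytope P"
    and "aff_dim P = int CARD('n)"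
  shows "(\<forall>\<epsilon>>0. (conv_ind_gauss P \<epsilon>) summable_on lattice_points)
    \<and> ((\<lambda>\<epsilon>. \<Sum>\<^sub>\<infinity>x\<in>lattice_points. conv_ind_gauss P \<epsilon> x) \<longlongrightarrow> A_P P 1) (at_right 0)"
proof -
  obtain S where S: "finite S" and Pdef: "P = {y. \<forall>p\<in>S. fst p \<bullet> y \<le> snd p}"
    using polytope_halfspaces[OF assms(1)] by blast
  have Pb[measurable]: "P \<in> sets borel" unfolding Pdef using S by measurable
  obtain R where R0: "R > 0" and R: "\<And>y. y \<in> P \<Longrightarrow> norm y \<le> R"
    using polytope_imp_bounded[OF assms(1)] unfolding bounded_pos by blast
  define L where "L = (lattice_points :: (real^'n) set)"
  define \<omega> where "\<omega> x = measure lborel (tcone S x \<inter> ball 0 1) / measure lborel (ball (0::real^'n) 1)" for x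
  have om: "solid_angle P x = \<omega> x" for x unfolding \<omega>_def by (rule solid_angle_eq[OF S Pdef])
  have clim: "((\<lambda>\<epsilon>. conv_ind_gauss P \<epsilon> x) \<longlongrightarrow> \<omega> x) (at_right 0)" for x
    unfolding \<omega>_def by (rule conv_limit[OF S Pdef])
  define J where "J = sqrt 2 ^ CARD('n)"
  have J: "J \<ge> 0" unfolding J_def by simp
  let ?G = "\<lambda>c. \<lambda>x::real^'n. exp (- c * (norm x)\<^sup>2)"
  have summ: "conv_ind_gauss P \<epsilon> summable_on L" if e: "\<epsilon> > 0" for \<epsilon>
  proof (rule summable_on_comparison_test)
    show "(\<lambda>x. (J * exp (pi * R\<^sup>2 / (2*\<epsilon>))) * ?G (pi / (4*\<epsilon>)) x) summable_on L"
      unfolding L_def using e by (intro summable_on_cmult_right lattice_gauss_summable) simp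
    fix x assume "x \<in> L"
    define D where "D = max 0 (norm x - R)"
    have "conv_ind_gauss P \<epsilon> x \<le> J * exp (- pi * D\<^sup>2 / (2*\<epsilon>))"
      unfolding J_def by (rule conv_bound[OF Pb R e]) (auto simp: D_def)
    also have "\<dots> \<le> J * (exp (pi * R\<^sup>2 / (2*\<epsilon>)) * ?G (pi / (4*\<epsilon>)) x)"
    proof (intro mult_left_mono J)
      have "(norm x)\<^sup>2 / 2 - R\<^sup>2 \<le> D\<^sup>2" unfolding D_def by (rule D_bound1) simp
      then have "pi / (2*\<epsilon>) * ((norm x)\<^sup>2 / 2 - R\<^sup>2) \<le> pi / (2*\<epsilon>) * D\<^sup>2"
        using e by (intro mult_left_mono) auto
      then have "pi / (2*\<epsilon>) * ((norm x)\<^sup>2 / 2) - pi / (2*\<epsilon>) * R\<^sup>2 \<le> pi / (2*\<epsilon>) * D\<^sup>2"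
        by (simp only: right_diff_distrib)
      moreover have "- pi * D\<^sup>2 / (2*\<epsilon>) = - (pi / (2*\<epsilon>) * D\<^sup>2)" by simp
      moreover have "pi * R\<^sup>2 / (2*\<epsilon>) = pi / (2*\<epsilon>) * R\<^sup>2" by simp
      moreover have "- (pi / (4*\<epsilon>)) * (norm x)\<^sup>2 = - (pi / (2*\<epsilon>) * ((norm x)\<^sup>2 / 2))" by simp
      ultimately have "- pi * D\<^sup>2 / (2*\<epsilon>) \<le> pi * R\<^sup>2 / (2*\<epsilon>) + - (pi / (4*\<epsilon>)) * (norm x)\<^sup>2"
        by (metis lin_helper2)
      then show "exp (- pi * D\<^sup>2 / (2*\<epsilon>)) \<le> exp (pi * R\<^sup>2 / (2*\<epsilon>)) * ?G (pi / (4*\<epsilon>)) x"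
        by (simp flip: exp_add)
    qed
    finally show "conv_ind_gauss P \<epsilon> x \<le> (J * exp (pi * R\<^sup>2 / (2*\<epsilon>))) * ?G (pi / (4*\<epsilon>)) x"
      by (simp add: mult.assoc)
  qed (rule conv_nonneg)
  define F where "F = {x \<in> L. norm x < R + 1}"
  have Ffin: "finite F" unfolding F_def L_def by (rule lattice_bounded_finite)
  have FL: "F \<subseteq> L" unfolding F_def by auto
  define T where "T \<epsilon> = infsum (conv_ind_gauss P \<epsilon>) (L - F)" for \<epsilon>
  have split: "infsum (conv_ind_gauss P \<epsilon>) L = sum (conv_ind_gauss P \<epsilon>) F + T \<epsilon>" if e: "\<epsilon> > 0" for \<epsilon>
  proof -
    have "L = F \<union> (L - F)" using FL by auto
    then have "infsum (conv_ind_gauss P \<epsilon>) L = infsum (conv_ind_gauss P \<epsilon>) (F \<union> (L - F))" by simp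
    also have "\<dots> = infsum (conv_ind_gauss P \<epsilon>) F + infsum (conv_ind_gauss P \<epsilon>) (L - F)"
      by (intro infsum_Un_disjoint summable_on_subset_banach[OF summ[OF e]]) (use FL in auto)
    finally show ?thesis using Ffin by (simp add: T_def)
  qed
  have Gs: "?G (pi/4) summable_on (L - F)"
    unfolding L_def by (rule summable_on_subset_banach[OF lattice_gauss_summable]) auto
  define C0 where "C0 = infsum (?G (pi/4)) (L - F)"
  define C where "C = J * exp (pi * R\<^sup>2 / 2) * C0"
  have Tb: "0 \<le> T \<epsilon> \<and> T \<epsilon> \<le> C * exp (- pi * (1/\<epsilon> - 1) / 2)" if e: "0 < \<epsilon>" "\<epsilon> \<le> 1" for \<epsilon>
  proof
    show "0 \<le> T \<epsilon>" unfolding T_def by (intro infsum_nonneg conv_nonneg)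
    have "T \<epsilon> \<le> infsum (\<lambda>x. (J * exp (pi * R\<^sup>2 / 2) * exp (- pi * (1/\<epsilon> - 1) / 2)) * ?G (pi/4) x) (L - F)"
      unfolding T_def
    proof (rule infsum_mono)
      show "conv_ind_gauss P \<epsilon> summable_on L - F"
        by (rule summable_on_subset_banach[OF summ[OF e(1)]]) auto
      show "(\<lambda>x. (J * exp (pi * R\<^sup>2 / 2) * exp (- pi * (1/\<epsilon> - 1) / 2)) * ?G (pi/4) x) summable_on L - F"
        by (rule summable_on_cmult_right[OF Gs])
      fix x assume x: "x \<in> L - F"
      then have nx: "norm x \<ge> R + 1" unfolding F_def by auto
      define D where "D = norm x - R"
      have D1: "D \<ge> 1" using nx by (simp add: D_def)
      have "conv_ind_gauss P \<epsilon> x \<le> J * exp (- pi * D\<^sup>2 / (2*\<epsilon>))"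
        unfolding J_def by (rule conv_bound[OF Pb R e(1)]) (use D1 in \<open>auto simp: D_def\<close>)
      also have "\<dots> \<le> J * (exp (pi * R\<^sup>2 / 2) * exp (- pi * (1/\<epsilon> - 1) / 2) * ?G (pi/4) x)"
      proof (intro mult_left_mono J)
        have "(norm x)\<^sup>2 / 2 - R\<^sup>2 \<le> D\<^sup>2" using D_bound1[of "norm x" R] D1 by (simp add: D_def max_def)
        moreover have "D\<^sup>2 \<ge> 1" using D1 by (simp add: one_le_power)
        moreover have "1/\<epsilon> - 1 \<ge> 0" using e by simp
        ultimately have mono1: "1 * (1/\<epsilon> - 1) \<le> D\<^sup>2 * (1/\<epsilon> - 1)" by (intro mult_right_mono) auto
        have eq1: "D\<^sup>2 / \<epsilon> = D\<^sup>2 + D\<^sup>2 * (1/\<epsilon> - 1)" by (simp add: right_diff_distrib)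
        have "(1/\<epsilon> - 1) + ((norm x)\<^sup>2 / 2 - R\<^sup>2) \<le> D\<^sup>2 / \<epsilon>"
          by (rule lin_helper3[OF eq1 mono1 \<open>(norm x)\<^sup>2 / 2 - R\<^sup>2 \<le> D\<^sup>2\<close>])
        then have "D\<^sup>2 / \<epsilon> \<ge> (1/\<epsilon> - 1) + ((norm x)\<^sup>2 / 2 - R\<^sup>2)" by simp
        then have "pi / 2 * ((1/\<epsilon> - 1) + ((norm x)\<^sup>2 / 2 - R\<^sup>2)) \<le> pi / 2 * (D\<^sup>2 / \<epsilon>)"
          by (intro mult_left_mono) auto
        then have "pi / 2 * (1/\<epsilon> - 1) + (pi / 2 * ((norm x)\<^sup>2 / 2) - pi / 2 * R\<^sup>2) \<le> pi / 2 * (D\<^sup>2 / \<epsilon>)"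
          by (simp only: distrib_left right_diff_distrib)
        moreover have "- pi * D\<^sup>2 / (2*\<epsilon>) = - (pi / 2 * (D\<^sup>2 / \<epsilon>))" by simp
        moreover have "pi * R\<^sup>2 / 2 = pi / 2 * R\<^sup>2" by simp
        moreover have "- pi * (1/\<epsilon> - 1) / 2 = - (pi / 2 * (1/\<epsilon> - 1))" by simp
        moreover have "- (pi/4) * (norm x)\<^sup>2 = - (pi / 2 * ((norm x)\<^sup>2 / 2))" by simp
        ultimately have "- pi * D\<^sup>2 / (2*\<epsilon>) \<le> pi * R\<^sup>2 / 2 + - pi * (1/\<epsilon> - 1) / 2 + - (pi/4) * (norm x)\<^sup>2"
          by (metis lin_helper4)
        then show "exp (- pi * D\<^sup>2 / (2*\<epsilon>)) \<le> exp (pi * R\<^sup>2 / 2) * exp (- pi * (1/\<epsilon> - 1) / 2) * ?G (pi/4) x"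
          by (simp flip: exp_add)
      qed
      finally show "conv_ind_gauss P \<epsilon> x \<le> (J * exp (pi * R\<^sup>2 / 2) * exp (- pi * (1/\<epsilon> - 1) / 2)) * ?G (pi/4) x"
        by (simp add: mult.assoc)
    qed
    also have "\<dots> = (J * exp (pi * R\<^sup>2 / 2) * exp (- pi * (1/\<epsilon> - 1) / 2)) * C0"
      unfolding C0_def by (rule infsum_cmult_right) (rule Gs)
    also have "\<dots> = C * exp (- pi * (1/\<epsilon> - 1) / 2)" by (simp add: C_def)
    finally show "T \<epsilon> \<le> C * exp (- pi * (1/\<epsilon> - 1) / 2)" .
  qed
  have Tlim: "(T \<longlongrightarrow> 0) (at_right 0)"
  proof (rule tendsto_sandwich[OF _ _ tendsto_const tail_exp_limit[of C]])
    have ev: "eventually (\<lambda>\<epsilon>::real. 0 < \<epsilon> \<and> \<epsilon> \<le> 1) (at_right 0)"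
      unfolding eventually_at_right_field by (intro exI[of _ 1]) auto
    show "eventually (\<lambda>\<epsilon>. 0 \<le> T \<epsilon>) (at_right 0)" using ev by eventually_elim (use Tb in auto)
    show "eventually (\<lambda>\<epsilon>. T \<epsilon> \<le> C * exp (- pi * (1/\<epsilon> - 1) / 2)) (at_right 0)"
      using ev by eventually_elim (use Tb in auto)
  qed
  have lim: "((\<lambda>\<epsilon>. infsum (conv_ind_gauss P \<epsilon>) L) \<longlongrightarrow> sum \<omega> F + 0) (at_right 0)"
  proof (rule Lim_transform_eventually)
    show "((\<lambda>\<epsilon>. sum (conv_ind_gauss P \<epsilon>) F + T \<epsilon>) \<longlongrightarrow> sum \<omega> F + 0) (at_right 0)"
      by (intro tendsto_add tendsto_sum Tlim clim)
    show "eventually (\<lambda>\<epsilon>. sum (conv_ind_gauss P \<epsilon>) F + T \<epsilon> = infsum (conv_ind_gauss P \<epsilon>) L) (at_right 0)"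
      using eventually_at_right_less[of 0] by eventually_elim (simp add: split)
  qed
  have AP: "A_P P 1 = sum \<omega> F"
  proof -
    have omf: "solid_angle P = \<omega>" by (rule ext, rule om)
    have "A_P P 1 = infsum \<omega> L" unfolding A_P_def L_def by (simp add: omf)
    also have "\<dots> = infsum \<omega> F"
    proof (rule infsum_cong_neutral)
      fix x assume x: "x \<in> L - F"
      then have "norm x \<ge> R + 1" unfolding F_def by auto
      then have "x \<notin> P" using R by force
      then have "tcone S x = {}" unfolding tcone_def Pdef by auto
      then show "\<omega> x = 0" unfolding \<omega>_def by simp
    qed (use FL in auto)
    also have "\<dots> = sum \<omega> F" using Ffin by simp
    finally show ?thesis .
  qed
  show ?thesis
    using summ lim AP unfolding L_def by simp
qed

end
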